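(* Let $d\ge 2$. Identifying $P(\mathbb{Z}^d)$ with its image under the diagonal embedding into $\mathbb{Z}_S^d$, we have $P(\mathbb{Z}_S^d)=\mathbb{Z}_S^\times\cdot P(\mathbb{Z}^d)$.
   Context: $S=\{\infty,p_1,\dots,p_s\}$ with $p_i$ distinct primes, $\mathbb{Z}_S=\mathbb{Z}[p_1^{-1},\dots,p_s^{-1}]$, $\mathbb{Z}_S^\times=\{\pm p_1^{k_1}\cdots p_s^{k_s}:k_i\in\mathbb{Z}\}$. $P(\mathbb{Z}_S^d)=\mathrm{SL}_d(\mathbb{Z}_S)\cdot\mathbf e_1$ and $P(\mathbb{Z}^d)=\mathrm{SL}_d(\mathbb{Z})\cdot\mathbf e_1$ (the integer vectors with coprime coordinates). *)

theory Defs
  imports "HOL-Analysis.Analysis"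
begin

text \<open>S = {infinity} union PS, where PS is a finite set of (distinct) primes.
  Z_S = Z[1/p : p in PS], viewed inside the rationals.\<close>

definition ZS :: "nat set \<Rightarrow> rat set" where
  "ZS PS = {q. \<exists>(a::int) (k::nat \<Rightarrow> nat).
               q = of_int a / (\<Prod>p\<in>PS. of_nat p ^ k p)}"

definition ZS_units :: "nat set \<Rightarrow> rat set" where
  "ZS_units PS = {q. \<exists>(\<epsilon>::rat) (k::nat \<Rightarrow> int). \<epsilon> \<in> {1, -1} \<and>
                     q = \<epsilon> * (\<Prod>p\<in>PS. of_nat p powi k p)}"

text \<open>SL_d(R) for a subring R of Q (given as a set), d = CARD('n).\<close>
definition SL_over :: "rat set \<Rightarrow> (rat^'n^'n) set" where
  "SL_over R = {A. (\<forall>i j. A $ i $ j \<in> R) \<and> det A = 1}"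

text \<open>P(R^d) = SL_d(R) . e, with e the standard basis vector at index i0.\<close>
definition prim_vecs :: "rat set \<Rightarrow> 'n::finite \<Rightarrow> (rat^'n) set" where
  "prim_vecs R i0 = {A *v axis i0 1 | A. A \<in> SL_over R}"

end

theory Submission
  imports Defs
begin

definition PP :: "nat set \<Rightarrow> nat" where "PP PS = \<Prod>PS"

context
  fixes PS :: "nat set"
  assumes fin: "finite PS" and pr: "\<forall>p\<in>PS. prime p"
begin

lemma p_nz: "p \<in> PS \<Longrightarrow> p \<noteq> 0"
  using pr by (metis not_prime_0)

lemma PP_pos: "PP PS > 0"
  unfolding PP_def using pr by (intro prod_pos) (metis prime_gt_0_nat)

lemma of_PP_pow: "(of_nat (PP PS ^ m) :: rat) = (\<Prod>p\<in>PS. of_nat p ^ m)"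
  unfolding PP_def by (simp add: prod_power_distrib)

lemma ZS_iff: "q \<in> ZS PS \<longleftrightarrow> (\<exists>m. of_nat (PP PS ^ m) * q \<in> \<int>)"
proof
  assume "q \<in> ZS PS"
  then obtain a k where q: "q = of_int a / (\<Prod>p\<in>PS. of_nat p ^ k p :: rat)"
    unfolding ZS_def by auto
  define m where "m = (\<Sum>p\<in>PS. k p)"
  have km: "k p \<le> m" if "p \<in> PS" for p
    unfolding m_def using that fin by (simp add: member_le_sum)
  have e: "(\<Prod>p\<in>PS. (of_nat p::rat) ^ m) = (\<Prod>p\<in>PS. of_nat p ^ k p) * (\<Prod>p\<in>PS. of_nat p ^ (m - k p))"
    by (subst prod.distrib[symmetric], rule prod.cong, simp, simp add: power_add[symmetric] km)
  have nz: "(\<Prod>p\<in>PS. (of_nat p::rat) ^ k p) \<noteq> 0"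
    using fin p_nz by (auto simp: prod_zero_iff)
  have "of_nat (PP PS ^ m) * q = of_int a * of_nat (\<Prod>p\<in>PS. p ^ (m - k p))"
    unfolding of_PP_pow e q using nz by (simp add: field_simps)
  also have "\<dots> \<in> \<int>" by (intro Ints_mult Ints_of_int Ints_of_nat)
  finally show "\<exists>m. of_nat (PP PS ^ m) * q \<in> \<int>" by blast
next
  assume "\<exists>m. of_nat (PP PS ^ m) * q \<in> \<int>"
  then obtain m a where ma: "of_nat (PP PS ^ m) * q = of_int a" by (auto elim: Ints_cases)
  have "q = of_int a / (\<Prod>p\<in>PS. of_nat p ^ m :: rat)"
    using ma PP_pos unfolding of_PP_pow[symmetric] by (simp add: field_simps)
  then show "q \<in> ZS PS" unfolding ZS_def by (auto intro!: exI[of _ a] exI[of _ "\<lambda>_. m"])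
qed

lemma ZS_mono: "of_nat (PP PS ^ m) * q \<in> \<int> \<Longrightarrow> m \<le> n \<Longrightarrow> of_nat (PP PS ^ n) * q \<in> \<int>"
proof -
  assume a: "of_nat (PP PS ^ m) * q \<in> \<int>" "m \<le> n"
  have "of_nat (PP PS ^ n) * q = of_nat (PP PS ^ (n - m)) * (of_nat (PP PS ^ m) * q)"
    using a(2) by (metis le_add_diff_inverse2 mult.assoc of_nat_mult power_add)
  then show ?thesis using a(1) by simp
qed

lemma ZS_Ints: "q \<in> \<int> \<Longrightarrow> q \<in> ZS PS"
  unfolding ZS_iff by (rule exI[of _ 0]) simp

lemma ZS_mult: "q \<in> ZS PS \<Longrightarrow> r \<in> ZS PS \<Longrightarrow> q * r \<in> ZS PS"
proof -
  assume "q \<in> ZS PS" "r \<in> ZS PS"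
  then obtain m n where "of_nat (PP PS ^ m) * q \<in> \<int>" "of_nat (PP PS ^ n) * r \<in> \<int>"
    unfolding ZS_iff by auto
  then have "(of_nat (PP PS ^ m) * q) * (of_nat (PP PS ^ n) * r) \<in> \<int>" by simp
  moreover have "(of_nat (PP PS ^ m) * q) * (of_nat (PP PS ^ n) * r) = of_nat (PP PS ^ (m+n)) * (q * r)"
    by (simp add: power_add)
  ultimately show ?thesis unfolding ZS_iff by metis
qed

lemma ZS_add: "q \<in> ZS PS \<Longrightarrow> r \<in> ZS PS \<Longrightarrow> q + r \<in> ZS PS"
proof -
  assume "q \<in> ZS PS" "r \<in> ZS PS"
  then obtain m n where "of_nat (PP PS ^ m) * q \<in> \<int>" "of_nat (PP PS ^ n) * r \<in> \<int>"
    unfolding ZS_iff by auto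
  then have "of_nat (PP PS ^ (m+n)) * q \<in> \<int>" "of_nat (PP PS ^ (m+n)) * r \<in> \<int>"
    by (meson ZS_mono le_add1 le_add2)+
  then have "of_nat (PP PS ^ (m+n)) * q + of_nat (PP PS ^ (m+n)) * r \<in> \<int>" by simp
  then show ?thesis unfolding ZS_iff by (metis distrib_left)
qed

lemma ZS_sum: "finite A \<Longrightarrow> (\<And>x. x \<in> A \<Longrightarrow> f x \<in> ZS PS) \<Longrightarrow> sum f A \<in> ZS PS"
  by (induction A rule: finite_induct) (auto intro: ZS_add ZS_Ints)

lemma ZS_prod: "finite A \<Longrightarrow> (\<And>x. x \<in> A \<Longrightarrow> f x \<in> ZS PS) \<Longrightarrow> prod f A \<in> ZS PS"
  by (induction A rule: finite_induct) (auto intro: ZS_mult ZS_Ints)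

lemma det_ZS: "\<forall>i j. (A::rat^'n::finite^'n) $ i $ j \<in> ZS PS \<Longrightarrow> det A \<in> ZS PS"
  unfolding det_def
  by (intro ZS_sum ZS_mult ZS_prod) (auto intro: ZS_Ints)

lemma units_props:
  assumes "u \<in> ZS_units PS"
  shows "u \<noteq> 0" "u \<in> ZS PS" "inverse u \<in> ZS_units PS"
proof -
  obtain e k where ek: "e \<in> {1, -1}" "u = e * (\<Prod>p\<in>PS. of_nat p powi k p)"
    using assms unfolding ZS_units_def by auto
  show "u \<noteq> 0" using ek fin p_nz by (auto simp: prod_zero_iff)
  have "inverse u = e * (\<Prod>p\<in>PS. of_nat p powi (- k p))"
    using ek by (auto simp: power_int_minus prod_inversef[symmetric] o_def)
  then show "inverse u \<in> ZS_units PS" unfolding ZS_units_def using ek(1)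
    by (intro CollectI exI[of _ e] exI[of _ "\<lambda>p. - k p"]) simp
  define m where "m = (\<Sum>p\<in>PS. nat (- k p))"
  have km: "nat (- k p) \<le> m" if "p \<in> PS" for p
    unfolding m_def by (rule member_le_sum) (use that fin in auto)
  have "of_nat (PP PS ^ m) * u = e * (\<Prod>p\<in>PS. (of_nat p ^ m) * (of_nat p powi k p))"
    unfolding of_PP_pow ek by (simp add: prod.distrib)
  also have "\<dots> = e * (\<Prod>p\<in>PS. of_nat (p ^ nat (int m + k p)))"
  proof -
    have "(of_nat p ^ m) * (of_nat p powi k p) = (of_nat (p ^ nat (int m + k p)) :: rat)"
      if "p \<in> PS" for p
    proof -
      have "(of_nat p ^ m) * (of_nat p powi k p) = (of_nat p :: rat) powi (int m + k p)"
        using p_nz[OF that] by (simp add: power_int_add)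
      also have "\<dots> = of_nat (p ^ nat (int m + k p))"
      proof -
        have "0 \<le> int m + k p" using km[OF that] by linarith
        then obtain n where n: "int m + k p = int n" by (metis nonneg_int_cases)
        then show ?thesis by (simp add: power_int_of_nat)
      qed
      finally show ?thesis .
    qed
    then show ?thesis by (simp cong: prod.cong)
  qed
  also have "\<dots> = e * of_nat (\<Prod>p\<in>PS. p ^ nat (int m + k p))" by (simp only: of_nat_prod)
  finally have eq: "of_nat (PP PS ^ m) * u = e * of_nat (\<Prod>p\<in>PS. p ^ nat (int m + k p))" .
  have "e \<in> \<int>" using ek(1) by auto
  then have "e * of_nat (\<Prod>p\<in>PS. p ^ nat (int m + k p)) \<in> \<int>" by (intro Ints_mult Ints_of_nat)
  then have "of_nat (PP PS ^ m) * u \<in> \<int>" by (simp only: eq)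
  then show "u \<in> ZS PS" unfolding ZS_iff by blast
qed

end

definition tv :: "'n::finite \<Rightarrow> 'n \<Rightarrow> rat \<Rightarrow> rat^'n^'n" where
  "tv i j c = (\<chi> k. if k = i then row i (mat 1) + c *s row j (mat 1) else row k (mat 1))"

lemma tv_det: "i \<noteq> j \<Longrightarrow> det (tv i j c) = 1"
  unfolding tv_def using det_row_operation[of i j "mat 1" c] by simp

lemma tv_ent: "tv i j c $ a $ b = (if a = b then 1 else 0) + (if a = i \<and> b = j then c else 0)"
  by (auto simp: tv_def row_def mat_def)

lemma tv_vec: "i \<noteq> j \<Longrightarrow> tv i j c *v w = (\<chi> k. if k = i then w$i + c * w$j else w$k)"
proof -
  assume ij: "i \<noteq> j"
  have "(tv i j c *v w) $ k = (if k = i then w$i + c * w$j else w$k)" for k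
  proof -
    have "(tv i j c *v w) $ k = (\<Sum>b\<in>UNIV. (if k = b then w$b else 0) + (if k = i \<and> b = j then c * w$b else 0))"
      unfolding matrix_vector_mult_def tv_ent by (auto intro!: sum.cong simp: algebra_simps)
    also have "\<dots> = w$k + (if k = i then c * w$j else 0)"
      unfolding sum.distrib by (cases "k = i") (auto simp: sum.delta)
    finally show ?thesis by simp
  qed
  then show ?thesis by (simp add: vec_eq_iff)
qed

lemma col_vec: "(M *v axis i 1) $ a = M $ a $ i"
  by (simp add: matrix_vector_mult_def axis_def if_distrib cong: if_cong)

lemma SL_mult: "A \<in> SL_over \<int> \<Longrightarrow> B \<in> SL_over \<int> \<Longrightarrow> A ** B \<in> SL_over \<int>"
  unfolding SL_over_def
  by (auto simp: det_mul) (auto simp: matrix_matrix_mult_def intro!: Ints_sum Ints_mult)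

lemma tv_SL: "i \<noteq> j \<Longrightarrow> c \<in> \<int> \<Longrightarrow> tv i j c \<in> SL_over \<int>"
  by (auto simp: SL_over_def tv_det tv_ent)

lemma Q_step:
  assumes ij: "i \<noteq> j" and c: "c \<in> \<int>" and Q: "tv i j c *v w \<in> prim_vecs \<int> i0"
  shows "w \<in> prim_vecs \<int> i0"
proof -
  obtain A where A: "A \<in> SL_over \<int>" "tv i j c *v w = A *v axis i0 1"
    using Q unfolding prim_vecs_def by auto
  have "tv i j (-c) ** A \<in> SL_over \<int>" using A(1) ij c by (intro SL_mult tv_SL) auto
  moreover have "(tv i j (-c) ** A) *v axis i0 1 = w"
    using ij by (simp add: matrix_vector_mul_assoc[symmetric] A(2)[symmetric] tv_vec vec_eq_iff)
  ultimately show ?thesis unfolding prim_vecs_def by blast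
qed

lemma Q_base0: "axis i0 1 \<in> prim_vecs \<int> i0"
proof -
  have "det (mat 1 :: rat^'n^'n) = 1" by simp
  moreover have "(mat 1 :: rat^'n^'n) $ i $ j \<in> \<int>" for i j by (simp add: mat_def)
  ultimately have "(mat 1 :: rat^'n^'n) \<in> SL_over \<int>" by (auto simp: SL_over_def)
  then show ?thesis unfolding prim_vecs_def by (auto intro!: exI[of _ "mat 1"])
qed

lemma Q_base1: "k \<noteq> i0 \<Longrightarrow> axis k 1 \<in> prim_vecs \<int> i0"
  apply (rule Q_step[of i0 k 1])
    apply simp apply simp
  apply (rule Q_step[of k i0 "-1"])
    apply simp apply simp
  apply (subgoal_tac "tv k i0 (- 1) *v (tv i0 k 1 *v axis k 1) = axis i0 1")
   apply (simp add: Q_base0)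
  apply (auto simp: tv_vec vec_eq_iff axis_def)
  done

lemma Q_base2: "k \<noteq> i0 \<Longrightarrow> - axis k 1 \<in> prim_vecs \<int> i0"
  apply (rule Q_step[of i0 k "-1"])
    apply simp apply simp
  apply (rule Q_step[of k i0 "1"])
    apply simp apply simp
  apply (subgoal_tac "tv k i0 1 *v (tv i0 k (-1) *v (- axis k 1)) = axis i0 1")
   apply (simp add: Q_base0)
  apply (auto simp: tv_vec vec_eq_iff axis_def)
  done

lemma Q_base3: "k \<noteq> i0 \<Longrightarrow> - axis i0 1 \<in> prim_vecs \<int> i0"
  apply (rule Q_step[of k i0 "-1"])
    apply simp apply simp
  apply (rule Q_step[of i0 k "1"])
    apply simp apply simp
  apply (subgoal_tac "tv i0 k 1 *v (tv k i0 (-1) *v (- axis i0 1)) = axis k 1")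
   apply (simp add: Q_base1)
  apply (auto simp: tv_vec vec_eq_iff axis_def)
  done


lemma prim_int:
  fixes f :: "'n::finite \<Rightarrow> int" and i0 :: 'n
  assumes card: "CARD('n) \<ge> 2" and pr: "\<And>d. (\<forall>k. d dvd f k) \<Longrightarrow> is_unit d"
  shows "(\<chi> k. (of_int (f k) :: rat)) \<in> prim_vecs \<int> i0"
  using pr
proof (induction "\<Sum>k\<in>UNIV. nat \<bar>f k\<bar>" arbitrary: f rule: less_induct)
  case less
  show ?case
  proof (cases "\<exists>i j. i \<noteq> j \<and> f i \<noteq> 0 \<and> f j \<noteq> 0")
    case True
    then obtain i j where ij: "i \<noteq> j" "f i \<noteq> 0" "f j \<noteq> 0" "\<bar>f j\<bar> \<le> \<bar>f i\<bar>"
      by (metis linorder_le_cases)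
    define c where "c = - (sgn (f i) * sgn (f j))"
    define g where "g = f(i := f i + c * f j)"
    have gi: "\<bar>g i\<bar> < \<bar>f i\<bar>"
      using ij unfolding g_def c_def
      by (cases "f i > 0"; cases "f j > 0") (auto simp: sgn_if abs_if)
    have lt: "(\<Sum>k\<in>UNIV. nat \<bar>g k\<bar>) < (\<Sum>k\<in>UNIV. nat \<bar>f k\<bar>)"
    proof (rule sum_strict_mono_ex1)
      show "\<forall>x\<in>UNIV. nat \<bar>g x\<bar> \<le> nat \<bar>f x\<bar>" using gi by (auto simp: g_def)
      show "\<exists>a\<in>UNIV. nat \<bar>g a\<bar> < nat \<bar>f a\<bar>" using gi by (intro bexI[of _ i]) auto
    qed simp
    have prg: "is_unit d" if "\<forall>k. d dvd g k" for d
    proof (rule less.prems)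
      show "\<forall>k. d dvd f k"
      proof
        fix k
        show "d dvd f k"
        proof (cases "k = i")
          case True
          have "f i = g i - c * g j" using ij by (simp add: g_def)
          then show ?thesis using that True by (metis dvd_diff dvd_mult)
        next
          case False
          then show ?thesis using that by (metis fun_upd_other g_def)
        qed
      qed
    qed
    have IH: "(\<chi> k. (of_int (g k) :: rat)) \<in> prim_vecs \<int> i0"
      using less.hyps[OF lt prg] by blast
    have eq: "tv i j (of_int c) *v (\<chi> k. (of_int (f k) :: rat)) = (\<chi> k. of_int (g k))"
      using ij by (simp add: tv_vec vec_eq_iff g_def)
    show ?thesis
      by (rule Q_step[of i j "of_int c"]) (use ij IH eq in simp_all)
  next
    case False
    have "\<exists>k. f k \<noteq> 0"
    proof (rule ccontr)
      assume "\<not> (\<exists>k. f k \<noteq> 0)"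
      then have "is_unit (0::int)" using less.prems by auto
      then show False by simp
    qed
    then obtain k where k: "f k \<noteq> 0" by blast
    have z: "f j = 0" if "j \<noteq> k" for j using False k that by blast
    have "is_unit (f k)"
    proof (rule less.prems, rule allI)
      fix k' show "f k dvd f k'" by (cases "k' = k") (auto simp: z)
    qed
    then have fk: "f k = 1 \<or> f k = -1" by auto
    have "UNIV \<noteq> {k}"
    proof
      assume "UNIV = {k}"
      then have "CARD('n) = card {k}" by (metis)
      then have "CARD('n) = 1" by simp
      with card show False by simp
    qed
    then obtain j where j: "j \<noteq> k" by auto
    show ?thesis
    proof (cases "k = i0")
      case True
      show ?thesis using fk
      proof
        assume "f k = 1"
        then have "(\<chi> k. (of_int (f k) :: rat)) = axis i0 1"
          using z True by (auto simp: vec_eq_iff axis_def)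
        then show ?thesis by (simp add: Q_base0)
      next
        assume "f k = -1"
        then have "(\<chi> k. (of_int (f k) :: rat)) = - axis i0 1"
          using z True by (auto simp: vec_eq_iff axis_def)
        then show ?thesis using Q_base3[of j i0] j True by simp
      qed
    next
      case False
      show ?thesis using fk
      proof
        assume "f k = 1"
        then have "(\<chi> k. (of_int (f k) :: rat)) = axis k 1"
          using z by (auto simp: vec_eq_iff axis_def)
        then show ?thesis using Q_base1[of k i0] False by simp
      next
        assume "f k = -1"
        then have "(\<chi> k. (of_int (f k) :: rat)) = - axis k 1"
          using z by (auto simp: vec_eq_iff axis_def)
        then show ?thesis using Q_base2[of k i0] False by simp
      qed
    qed
  qed
qed


lemma dvd_PP_units:
  assumes fin: "finite PS" and pr: "\<forall>p\<in>PS. prime p" and G: "G > 0" "G dvd PP PS ^ K"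
  shows "\<exists>e. (of_nat G :: rat) = (\<Prod>p\<in>PS. of_nat p ^ e p)"
proof -
  have sub: "prime_factors G \<subseteq> PS"
  proof
    fix q assume q: "q \<in> prime_factors G"
    then have pq: "prime q" "q dvd G" by (auto simp: in_prime_factors_iff)
    then have "q dvd PP PS ^ K" using G dvd_trans by blast
    then have "q dvd PP PS" using pq prime_dvd_power by blast
    then obtain p where p: "p \<in> PS" "q dvd p"
      unfolding PP_def using fin pq prime_dvd_prod_iff[of PS q "\<lambda>x. x"] by auto
    then have "q = p" using pr pq by (intro primes_dvd_imp_eq) auto
    then show "q \<in> PS" using p by simp
  qed
  have "G = (\<Prod>p\<in>prime_factors G. p ^ multiplicity p G)"
    using G(1) by (rule prime_factorization_nat)
  also have "\<dots> = (\<Prod>p\<in>PS. p ^ multiplicity p G)"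
  proof (rule prod.mono_neutral_left[OF fin sub])
    show "\<forall>i\<in>PS - prime_factors G. i ^ multiplicity i G = 1"
      using pr G(1) by (auto simp: in_prime_factors_iff not_dvd_imp_multiplicity_0)
  qed
  finally have eq: "G = (\<Prod>p\<in>PS. p ^ multiplicity p G)" .
  have "(of_nat G :: rat) = of_nat (\<Prod>p\<in>PS. p ^ multiplicity p G)" using arg_cong[OF eq, of of_nat] .
  also have "\<dots> = (\<Prod>p\<in>PS. of_nat p ^ multiplicity p G)" by simp
  finally have "(of_nat G :: rat) = (\<Prod>p\<in>PS. of_nat p ^ multiplicity p G)" .
  then show ?thesis by (intro exI[of _ "\<lambda>p. multiplicity p G"])
qed

lemma mult_diag: "((M::rat^'n::finite^'n) ** (\<chi> a b. if a = b then dd a else 0)) $ a $ b = M $ a $ b * dd b"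
proof -
  have "(\<Sum>k\<in>UNIV. M $ a $ k * (if k = b then dd k else 0)) = (\<Sum>k\<in>UNIV. if k = b then M $ a $ k * dd k else 0)"
    by (rule sum.cong) auto
  then show ?thesis unfolding matrix_matrix_mult_def by simp
qed

theorem proposition2p4:
  fixes PS :: "nat set" and i0 :: "'n::finite"
  assumes "finite PS" and "\<forall>p\<in>PS. prime p" and "CARD('n) \<ge> 2"
  shows "prim_vecs (ZS PS) i0 =
           {u *s v | u v. u \<in> ZS_units PS \<and> v \<in> prim_vecs \<int> i0}"
proof
  note fin = assms(1) and pr = assms(2)
  note ZSi = ZS_iff[OF fin pr]
  show "prim_vecs (ZS PS) i0 \<subseteq> {u *s v | u v. u \<in> ZS_units PS \<and> v \<in> prim_vecs \<int> i0}"
  proof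
    fix x assume "x \<in> prim_vecs (ZS PS) i0"
    then obtain B where B: "B \<in> SL_over (ZS PS)" "x = B *v axis i0 1"
      unfolding prim_vecs_def by auto
    have Bent: "B$a$b \<in> ZS PS" for a b using B(1) by (simp add: SL_over_def)
    have "\<exists>m. of_nat (PP PS ^ m) * B$a$i0 \<in> \<int>" for a using Bent ZSi by blast
    then have exm: "\<forall>a. \<exists>m. of_nat (PP PS ^ m) * B$a$i0 \<in> \<int>" by blast
    obtain mf where mf: "\<And>a. of_nat (PP PS ^ mf a) * B$a$i0 \<in> \<int>"
      using choice[OF exm] by blast
    define M where "M = (\<Sum>a\<in>UNIV. mf a)"
    have "of_nat (PP PS ^ M) * B$a$i0 \<in> \<int>" for a
      by (rule ZS_mono[OF fin pr mf]) (simp add: M_def member_le_sum)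
    then have ex: "\<forall>a. \<exists>z. of_nat (PP PS ^ M) * B$a$i0 = of_int z" by (auto simp: Ints_def)
    obtain f where f: "\<And>a. of_nat (PP PS ^ M) * B$a$i0 = of_int (f a)"
      using choice[OF ex] by blast
    define N :: rat where "N = of_nat (PP PS ^ M)"
    have N0: "N > 0" unfolding N_def using PP_pos[OF fin pr] by simp
    have Bf: "B$a$i0 = of_int (f a) / N" for a using f[of a] N0 unfolding N_def[symmetric]
      by (simp add: field_simps)
    define g where "g = Gcd (range f)"
    define f' where "f' a = f a div g" for a
    have fg: "f a = g * f' a" for a
      unfolding f'_def g_def by (simp add: Gcd_dvd)
    define u where "u = of_int g / N"
    define B' :: "rat^'n^'n" where "B' = (\<chi> a b. if b = i0 then of_int (f' a) else B$a$b)"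
    define dd where "dd = (\<lambda>b::'n. if b = i0 then u else 1)"
    define D :: "rat^'n^'n" where "D = (\<chi> a b. if a = b then dd a else 0)"
    have BD: "B = B' ** D"
    proof -
      have "(B' ** D) $ a $ b = B' $ a $ b * dd b" for a b
        unfolding D_def by (rule mult_diag)
      moreover have "B' $ a $ b * dd b = B $ a $ b" for a b
        unfolding B'_def dd_def u_def using Bf[of a] fg[of a] by auto
      ultimately show ?thesis by (simp add: vec_eq_iff)
    qed
    have detD: "det D = u"
      by (subst det_diagonal) (auto simp: D_def dd_def prod.delta)
    have "det B = 1" using B(1) by (simp add: SL_over_def)
    then have dB': "det B' * u = 1" unfolding BD det_mul detD .
    have B'ZS: "det B' \<in> ZS PS"
      by (rule det_ZS[OF fin pr]) (auto simp: B'_def Bent intro: ZS_Ints[OF fin pr])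
    have g0: "g \<noteq> 0" using dB' unfolding u_def by auto
    have gpos: "g > 0" using g0 unfolding g_def by (metis Gcd_int_greater_eq_0 order_le_less)
    have dB'': "det B' = N / of_int g" using dB' g0 N0 unfolding u_def by (simp add: field_simps)
    obtain n a where na: "of_nat (PP PS ^ n) * det B' = of_int a"
      using B'ZS unfolding ZSi by (auto elim: Ints_cases)
    have "(of_int (int (PP PS ^ (n + M))) :: rat) = of_int (a * g)"
      using na g0 unfolding dB'' N_def by (simp add: field_simps power_add)
    then have "int (PP PS ^ (n + M)) = a * g" by linarith
    then have "g dvd int (PP PS ^ (n + M))" by simp
    then have "nat g dvd PP PS ^ (n + M)" using gpos
      by (metis int_dvd_int_iff int_nat_eq order_less_imp_le)
    then obtain e where e: "(of_nat (nat g) :: rat) = (\<Prod>p\<in>PS. of_nat p ^ e p)"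
      using dvd_PP_units[OF fin pr] gpos by (meson zero_less_nat_eq)
    have "u = (\<Prod>p\<in>PS. of_nat p powi (int (e p) - int M))"
    proof -
      have "u = (\<Prod>p\<in>PS. of_nat p ^ e p) / (\<Prod>p\<in>PS. of_nat p ^ M)"
        unfolding u_def N_def of_PP_pow[OF fin pr] e[symmetric] using gpos by simp
      also have "\<dots> = (\<Prod>p\<in>PS. of_nat p ^ e p / of_nat p ^ M)" by (simp add: prod_dividef)
      also have "\<dots> = (\<Prod>p\<in>PS. of_nat p powi (int (e p) - int M))"
        using p_nz[OF fin pr] by (intro prod.cong) (auto simp: power_int_diff power_int_of_nat)
      finally show ?thesis .
    qed
    then have uU: "u \<in> ZS_units PS" unfolding ZS_units_def
      by (auto intro!: exI[of _ 1] exI[of _ "\<lambda>p. int (e p) - int M"])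
    have prf': "is_unit d" if "\<forall>k. d dvd f' k" for d
    proof -
      have dg: "d * g dvd f k" for k using that fg by (metis mult.commute mult_dvd_mono dvd_refl)
      have "d * g dvd Gcd (range f)" by (rule Gcd_greatest) (use dg in auto)
      then have "d * g dvd g" by (simp add: g_def)
      then have "d * g dvd 1 * g" by simp
      then show ?thesis using g0 dvd_times_right_cancel_iff by blast
    qed
    have vP: "(\<chi> k. (of_int (f' k) :: rat)) \<in> prim_vecs \<int> i0"
      by (rule prim_int[OF assms(3)]) (use prf' in blast)
    have "x = u *s (\<chi> k. (of_int (f' k) :: rat))"
      unfolding B(2) using N0 by (simp add: vec_eq_iff col_vec Bf u_def fg)
    then show "x \<in> {u *s v | u v. u \<in> ZS_units PS \<and> v \<in> prim_vecs \<int> i0}"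
      using uU vP by blast
  qed
  show "{u *s v | u v. u \<in> ZS_units PS \<and> v \<in> prim_vecs \<int> i0} \<subseteq> prim_vecs (ZS PS) i0"
  proof safe
    fix u v assume u: "u \<in> ZS_units PS" and v: "v \<in> prim_vecs \<int> i0"
    obtain A where A: "A \<in> SL_over \<int>" "v = A *v axis i0 1"
      using v unfolding prim_vecs_def by auto
    have "UNIV \<noteq> {i0}"
    proof
      assume "UNIV = {i0}"
      then have "CARD('n) = card {i0}" by (metis)
      then have "CARD('n) = 1" by simp
      with assms(3) show False by simp
    qed
    then obtain j where j: "j \<noteq> i0" by auto
    have u0: "u \<noteq> 0" and uZ: "u \<in> ZS PS" and uiZ: "inverse u \<in> ZS PS"
      using units_props[OF fin pr u] units_props[OF fin pr units_props(3)[OF fin pr u]] by auto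
    define dd where "dd = (\<lambda>b::'n. if b = i0 then u else if b = j then inverse u else 1)"
    define D :: "rat^'n^'n" where "D = (\<chi> a b. if a = b then dd a else 0)"
    define B where "B = A ** D"
    have Bent: "B $ a $ b = A $ a $ b * dd b" for a b
      unfolding B_def D_def by (rule mult_diag)
    have "dd = (\<lambda>b. (if b = i0 then u else 1) * (if b = j then inverse u else 1))"
      using j by (auto simp: dd_def fun_eq_iff)
    then have "det D = u * inverse u"
      by (subst det_diagonal) (auto simp: D_def prod.distrib prod.delta)
    then have detD: "det D = 1" using u0 by simp
    have AZ: "A $ a $ b \<in> \<int>" for a b using A(1) by (simp add: SL_over_def)
    have "B \<in> SL_over (ZS PS)"
      unfolding SL_over_def
    proof safe
      show "B $ a $ b \<in> ZS PS" for a b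
      proof -
        have "A $ a $ b \<in> ZS PS" using AZ by (rule ZS_Ints[OF fin pr])
        moreover have "dd b \<in> ZS PS" unfolding dd_def using uZ uiZ ZS_Ints[OF fin pr, of 1] by auto
        ultimately show ?thesis unfolding Bent by (rule ZS_mult[OF fin pr])
      qed
      show "det B = 1" using A(1) detD by (simp add: B_def det_mul SL_over_def)
    qed
    moreover have "B *v axis i0 1 = u *s v"
      unfolding A(2) by (simp add: vec_eq_iff col_vec Bent dd_def)
    ultimately show "u *s v \<in> prim_vecs (ZS PS) i0"
      unfolding prim_vecs_def by (intro CollectI exI[of _ B]) simp
  qed
qed

end
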